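(* With the notation of the context, there is a constant $L>0$ depending only on $a$ and $b$ such that for every integer $m\ge\max\{-\frac{3}{4\ln u},\frac1{6c}\}$, the truncated vector $\alpha$ defined by $\alpha_k=\nu_k$ for $k\le2m+1$ and $\alpha_k=0$ otherwise satisfies: (i) $\big|\|\alpha\|^2-\frac1{4a}\big|\le Lmu^{2m}$; (ii) $\alpha^\top\eta=0$; (iii) $\big|\alpha^\top M^\top M\alpha-1\big|\le Lm^2u^{2m}$; (iv) $\alpha^\top\mathrm{Diag}(\lambda)^{-1}\alpha\le Lm^{3/2}$.
   Context: Let $a,b>0$, $\mu=\mathcal N(0,1/(4a))$ on $\mathbb R$, $c=\sqrt{a^2+2ab}$, $u=\frac{b}{a+b+c}\in(0,1)$. $f_i(x)=(c/a)^{1/4}(2^ii!)^{-1/2}e^{-(c-a)x^2}H_i(\sqrt{2c}\,x)$ ($H_i$ physicists' Hermite polynomials) form an orthonormal basis of $L^2(\mu)$; $\lambda_i=\sqrt{\frac{2a}{a+b+c}}\,u^i$. $\eta_i=\int f_id\mu$: $\eta_{2k+1}=0$, $\eta_{2k}=(c/a)^{1/4}\sqrt{\frac{2a}{a+c}}u^k\frac{\sqrt{(2k)!}}{2^kk!}$. $M^\top M$ is the symmetric matrix with $(M^\top M)_{ii}=\frac1c(2i(a^2+c^2)+(a-c)^2)$, $(M^\top M)_{i,i+2}=(M^\top M)_{i+2,i}=\frac1c(a^2-c^2)\sqrt{(i+1)(i+2)}$, other entries zero (so $\mathbb E_\mu(f'^2)=\beta^\top M^\top M\beta$ for $f=\sum\beta_if_i$).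 $\nu$ is the coefficient vector of $f_*(x)=x$: $\nu_{2k}=0$, $\nu_{2k+1}=(c/a)^{1/4}\frac{\sqrt a}{2c}\big(\frac{2c}{a+c}\big)^{3/2}u^k\frac{\sqrt{(2k+1)!}}{2^kk!}$. *)

theory Defs
  imports "HOL-Analysis.Analysis"
begin

definition cc :: "real \<Rightarrow> real \<Rightarrow> real" where
  "cc a b = sqrt (a^2 + 2*a*b)"

definition uu :: "real \<Rightarrow> real \<Rightarrow> real" where
  "uu a b = b / (a + b + cc a b)"

definition lam :: "real \<Rightarrow> real \<Rightarrow> nat \<Rightarrow> real" where
  "lam a b i = sqrt (2*a / (a + b + cc a b)) * uu a b ^ i"

text \<open>eta_i = integral of f_i against mu.\<close>
definition eta :: "real \<Rightarrow> real \<Rightarrow> nat \<Rightarrow> real" where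
  "eta a b i = (if even i then
     (let k = i div 2; c = cc a b in
       (c/a) powr (1/4) * sqrt (2*a/(a+c)) * uu a b ^ k
         * sqrt (fact (2*k)) / (2^k * fact k))
   else 0)"

definition MtM :: "real \<Rightarrow> real \<Rightarrow> nat \<Rightarrow> nat \<Rightarrow> real" where
  "MtM a b i j = (let c = cc a b in
     if i = j then (2 * real i * (a^2 + c^2) + (a - c)^2) / c
     else if j = i + 2 then (a^2 - c^2) * sqrt ((real i + 1) * (real i + 2)) / c
     else if i = j + 2 then (a^2 - c^2) * sqrt ((real j + 1) * (real j + 2)) / c
     else 0)"

text \<open>Coefficient vector nu of f_*(x) = x.\<close>
definition nu :: "real \<Rightarrow> real \<Rightarrow> nat \<Rightarrow> real" where
  "nu a b i = (if odd i then
     (let k = i div 2; c = cc a b in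
       (c/a) powr (1/4) * sqrt a / (2*c) * (2*c/(a+c)) powr (3/2) * uu a b ^ k
         * sqrt (fact (2*k+1)) / (2^k * fact k))
   else 0)"

definition alpha :: "real \<Rightarrow> real \<Rightarrow> nat \<Rightarrow> nat \<Rightarrow> real" where
  "alpha a b m k = (if k \<le> 2*m+1 then nu a b k else 0)"

end

theory Submission
  imports Defs "HOL-Analysis.Analysis"
begin



lemma tail_bound:
  fixes f :: "nat \<Rightarrow> real"
  assumes fs: "f sums s" and r: "0 \<le> r" and sm: "summable (\<lambda>i. (real i+1)^p * r^i)"
    and bd: "\<And>j. \<bar>f j\<bar> \<le> B * (real j+1)^p * r^j"
  shows "\<bar>s - (\<Sum>j<n. f j)\<bar> \<le> B * suminf (\<lambda>i. (real i+1)^p * r^i) * ((real n+1)^p * r^n)"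
proof -
  have B: "B \<ge> 0" using bd[of 0] by (metis abs_ge_zero mult_1_right of_nat_0 one_power2 power_0 power_one add_0 order_trans)
  have sf: "summable f" using fs sums_summable by blast
  have "s = (\<Sum>i. f (i + n)) + (\<Sum>i<n. f i)" using suminf_split_initial_segment[OF sf] fs sums_unique by blast
  hence eq: "s - (\<Sum>j<n. f j) = (\<Sum>i. f (i + n))" by simp
  have b2: "\<bar>f (i+n)\<bar> \<le> (B * ((real n+1)^p * r^n)) * ((real i+1)^p * r^i)" for i
  proof -
    have "\<bar>f (i+n)\<bar> \<le> B * (real (i+n)+1)^p * r^(i+n)" by (rule bd)
    also have "\<dots> \<le> B * (((real n+1)*(real i+1))^p) * r^(i+n)"
      by (intro mult_right_mono mult_left_mono power_mono B) (auto simp: algebra_simps r)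
    also have "\<dots> = (B * ((real n+1)^p * r^n)) * ((real i+1)^p * r^i)"
      by (simp only: power_mult_distrib power_add mult_ac)
    finally show ?thesis .
  qed
  have sm2: "summable (\<lambda>i. (B * ((real n+1)^p * r^n)) * ((real i+1)^p * r^i))"
    using sm by (rule summable_mult)
  have "\<bar>\<Sum>i. f (i + n)\<bar> \<le> (\<Sum>i. (B * ((real n+1)^p * r^n)) * ((real i+1)^p * r^i))"
  proof -
    have s1: "summable (\<lambda>i. \<bar>f (i+n)\<bar>)"
      by (rule summable_comparison_test[OF _ sm2]) (use b2 in auto)
    have "\<bar>\<Sum>i. f (i + n)\<bar> \<le> (\<Sum>i. \<bar>f (i + n)\<bar>)" by (rule summable_rabs[OF s1])
    also have "\<dots> \<le> (\<Sum>i. (B * ((real n+1)^p * r^n)) * ((real i+1)^p * r^i))"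
      by (rule suminf_le[OF b2 s1 sm2])
    finally show ?thesis .
  qed
  also have "\<dots> = B * suminf (\<lambda>i. (real i+1)^p * r^i) * ((real n+1)^p * r^n)"
    using suminf_mult[OF sm, of "B * ((real n+1)^p * r^n)"] by (simp add: mult_ac)
  finally show ?thesis using eq by simp
qed



definition tt :: "nat \<Rightarrow> real" where
  "tt j = fact (2*j+1) / (4^j * (fact j)^2)"

lemma tt_pos: "tt j > 0" by (simp add: tt_def)

lemma tt_Suc: "tt (Suc j) = tt j * (2*real j+3) / (2*real j+2)"
proof -
  have f1: "fact (2*Suc j+1) = (fact (2*j+1) :: real) * (2*real j+2) * (2*real j+3)"
    by (simp add: fact_Suc algebra_simps)
  have f2: "fact (Suc j) = (fact j :: real) * (real j + 1)" by (simp add: fact_Suc algebra_simps)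
  have g: "F * (2*x+2) * (2*x+3) / (4 * P * (G * (x+1))^2) = F / (P * G^2) * (2*x+3) / (2*x+2)"
    if "F > 0" "P > 0" "G > 0" "x \<ge> 0" for F P G x :: real
  proof -
    have "F * (2*x+2) * (2*x+3) / (4 * P * (G * (x+1))^2) = (F * (2*x+3)) * (2*(x+1)) / ((P * G^2 * (2*x+2)) * (2*(x+1)))"
      by (simp add: power2_eq_square algebra_simps)
    also have "\<dots> = (F * (2*x+3)) / (P * G^2 * (2*x+2))"
      using that by (intro mult_divide_mult_cancel_right) auto
    also have "\<dots> = F / (P * G^2) * (2*x+3) / (2*x+2)" by simp
    finally show ?thesis .
  qed
  show ?thesis unfolding tt_def f1 f2 power_Suc
    by (rule g) auto
qed

lemma poch32: "pochhammer (3/2::real) j / fact j = tt j"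
proof (induction j)
  case 0 then show ?case by (simp add: tt_def)
next
  case (Suc j)
  have "pochhammer (3/2::real) (Suc j) / fact (Suc j) = (pochhammer (3/2) j / fact j) * ((3/2 + real j)/(real j + 1))"
    by (simp add: pochhammer_Suc fact_Suc field_simps)
  also have "\<dots> = tt (Suc j)" using Suc by (simp add: tt_Suc field_simps)
  finally show ?case .
qed

lemma poch52: "pochhammer (5/2::real) j / fact j = tt j * (2*real j+3) / 3"
proof -
  have "pochhammer (3/2::real) (Suc j) = 3/2 * pochhammer (5/2) j"
    by (simp add: pochhammer_rec)
  hence "pochhammer (5/2::real) j = 2/3 * pochhammer (3/2) (Suc j)" by simp
  also have "pochhammer (3/2::real) (Suc j) = tt (Suc j) * fact (Suc j)"
    using poch32[of "Suc j"] by (subst (asm) divide_eq_eq) simp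
  finally have "pochhammer (5/2::real) j / fact j = 2/3 * tt (Suc j) * (real j + 1)"
    by (simp add: fact_Suc field_simps)
  also have "\<dots> = tt j * (2*real j+3) / 3" by (simp add: tt_Suc field_simps)
  finally show ?thesis .
qed

lemma tt_le: "tt j \<le> 2*real j+1"
proof (induction j)
  case 0 then show ?case by (simp add: tt_def)
next
  case (Suc j)
  have "tt (Suc j) = tt j * (2*real j+3) / (2*real j+2)" by (rule tt_Suc)
  also have "\<dots> \<le> (2*real j+1) * (2*real j+3) / (2*real j+2)"
    by (intro divide_right_mono mult_right_mono Suc) auto
  also have "\<dots> \<le> 2*real (Suc j)+1" by (simp add: field_simps)
  finally show ?case .
qed

lemma tt_sq: "tt j ^ 2 \<le> 2*real j+1"
proof (induction j)
  case 0 then show ?case by (simp add: tt_def)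
next
  case (Suc j)
  have "tt (Suc j)^2 = tt j^2 * ((2*real j+3) / (2*real j+2))^2" by (simp add: tt_Suc power_mult_distrib power_divide)
  also have "\<dots> \<le> (2*real j+1) * ((2*real j+3) / (2*real j+2))^2"
    by (intro mult_right_mono Suc) auto
  also have "\<dots> = (2*real j+1) * (2*real j+3)^2 / (2*real j+2)^2" by (simp add: power_divide)
  also have "\<dots> \<le> 2*real (Suc j)+1"
  proof -
    have "(2*real j+1) * (2*real j+3)^2 \<le> (2*real (Suc j) + 1) * (2*real j+2)^2"
      by (simp add: power2_eq_square algebra_simps)
    thus ?thesis by (simp add: pos_divide_le_eq)
  qed
  finally show ?case .
qed

lemma sumS1:
  assumes "0 \<le> x" "x < 1"
  shows "(\<lambda>j. tt j * x^j) sums (1 - x) powr (-3/2)"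
proof -
  have "(\<lambda>n. ((-3/2) gchoose n) * (-x)^n) sums (1 + (-x)) powr (-3/2)"
    by (rule gen_binomial_real) (use assms in auto)
  moreover have "((-3/2) gchoose n) * (-x)^n = tt n * x^n" for n
    by (simp add: gbinomial_pochhammer poch32[symmetric] power_minus' power_mult_distrib)
  ultimately show ?thesis by simp
qed

lemma sumS2:
  assumes "0 \<le> x" "x < 1"
  shows "(\<lambda>j. tt j * (2*real j+3) * x^j) sums (3 * (1 - x) powr (-5/2))"
proof -
  have "(\<lambda>n. ((-5/2) gchoose n) * (-x)^n) sums (1 + (-x)) powr (-5/2)"
    by (rule gen_binomial_real) (use assms in auto)
  hence "(\<lambda>n. 3 * (((-5/2) gchoose n) * (-x)^n)) sums (3 * (1 + (-x)) powr (-5/2))"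
    by (rule sums_mult)
  moreover have "3 * (((-5/2) gchoose n) * (-x)^n) = tt n * (2*real n+3) * x^n" for n
  proof -
    have p: "pochhammer (5/2) n = tt n * (2*real n+3) / 3 * fact n" using poch52[of n] by (simp add: field_simps)
    have m: "(-1::real)^n * (-1)^n = 1" by (simp add: power_mult_distrib[symmetric])
    have "3 * (((-5/2) gchoose n) * (-x)^n) = 3 * (((-1)^n * (-1)^n) * pochhammer (5/2) n * x^n / fact n)"
      by (simp add: gbinomial_pochhammer power_minus' mult_ac)
    also have "\<dots> = tt n * (2*real n+3) * x^n" unfolding m p by simp
    finally show ?thesis .
  qed
  ultimately show ?thesis by simp
qed




lemma pow4: "(2::real)^(j*2) = 4^j"
  by (simp only: mult.commute[of j 2] power_mult) simp

context fixes a b :: real assumes a: "a > 0" and b: "b > 0"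
begin

lemma c_sq: "cc a b ^ 2 = a^2 + 2*a*b"
proof -
  have "0 \<le> a^2 + 2*a*b" using a b by (intro add_nonneg_nonneg) auto
  from real_sqrt_pow2[OF this] show ?thesis unfolding cc_def .
qed

lemma c_gt: "cc a b > a"
proof -
  have "a^2 < (cc a b)^2" using c_sq a b by simp
  moreover have "cc a b \<ge> 0" unfolding cc_def by (rule real_sqrt_ge_zero) (use a b in \<open>intro add_nonneg_nonneg, auto\<close>)
  ultimately show ?thesis using a by (meson abs_le_square_iff abs_of_nonneg less_le_not_le power2_less_imp_less)
qed

lemma u_eq: "uu a b = (cc a b - a) / (cc a b + a)"
proof -
  define c where "c = cc a b"
  have c2: "c^2 = a^2 + 2*a*b" using c_sq c_def by simp
  have pos: "a + b + c > 0" "c + a > 0" using c_gt a b c_def by auto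
  have "b * (c + a) = (c - a) * (a + b + c)" using c2 by (simp add: power2_eq_square algebra_simps)
  thus ?thesis unfolding uu_def c_def[symmetric] using pos by (simp add: field_simps)
qed

lemma u_pos: "uu a b > 0" and u_lt1: "uu a b < 1"
  unfolding u_eq using c_gt a by (auto simp: field_simps)

lemma one_minus_u2: "1 - (uu a b)^2 = 4*a*cc a b / (a + cc a b)^2"
proof -
  define c where "c = cc a b"
  have p: "(c+a)^2 > 0" using c_gt a c_def by simp
  have "1 - ((c-a)/(c+a))^2 = ((c+a)^2 - (c-a)^2)/(c+a)^2" using p by (simp add: power_divide field_simps)
  also have "\<dots> = 4*a*c/(a+c)^2" by (simp add: power2_eq_square algebra_simps)
  finally show ?thesis unfolding u_eq c_def .
qed

definition "Cn = (cc a b/a) powr (1/4) * sqrt a / (2*cc a b) * (2*cc a b/(a+cc a b)) powr (3/2)"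
definition "KK = sqrt (cc a b/a) * a / (4 * cc a b^2) * (2*cc a b/(a+cc a b))^3"

lemma Cn_sq: "Cn^2 = KK"
proof -
  define c where "c = cc a b"
  have c: "c > 0" using c_gt a c_def by simp
  have e1: "((c/a) powr (1/4))^2 = sqrt (c/a)"
    using a c by (simp add: power2_eq_square powr_add[symmetric] powr_half_sqrt)
  have e2: "((2*c/(a+c)) powr (3/2))^2 = (2*c/(a+c))^3"
  proof -
    have "((2*c/(a+c)) powr (3/2))^2 = (2*c/(a+c)) powr 3"
      using a c by (simp add: power2_eq_square powr_add[symmetric])
    also have "\<dots> = (2*c/(a+c))^3" using a c by (simp add: powr_numeral)
    finally show ?thesis .
  qed
  show ?thesis unfolding Cn_def KK_def c_def[symmetric]
    by (simp add: power_mult_distrib power_divide e1 e2 a less_imp_le)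
qed

lemma nu_odd: "nu a b (2*j+1) = Cn * uu a b ^ j * sqrt (fact (2*j+1)) / (2^j * fact j)"
  unfolding nu_def Cn_def by (simp add: Let_def)

lemma nu_even: "nu a b (2*j) = 0" unfolding nu_def by simp

lemma nu_odd_sq: "nu a b (2*j+1)^2 = KK * (uu a b^2)^j * tt j"
proof -
  have "nu a b (2*j+1)^2 = Cn^2 * (uu a b^2)^j * sqrt (fact (2*j+1))^2 / (2^j * fact j)^2"
    unfolding nu_odd by (simp add: power_mult_distrib power_divide power_mult[symmetric] mult.commute)
  also have "\<dots> = KK * (uu a b^2)^j * tt j"
    unfolding Cn_sq tt_def by (simp add: power_mult_distrib power_mult[symmetric] mult.commute[of 2] pow4)
  finally show ?thesis .
qed

lemma M_diag: "MtM a b (2*j+1) (2*j+1) = (2*(2*real j+1)*(a^2+cc a b^2) + (a - cc a b)^2) / cc a b"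
  unfolding MtM_def by (simp add: Let_def)

lemma M_off: "MtM a b (2*j+1) (2*j+3) = (a^2 - cc a b^2) * sqrt ((2*real j+2)*(2*real j+3)) / cc a b"
  unfolding MtM_def by (simp add: Let_def algebra_simps)

lemma off_prod: "nu a b (2*j+1) * MtM a b (2*j+1) (2*j+3) * nu a b (2*j+3)
   = KK * uu a b * (uu a b^2)^j * (tt j * (2*real j+3)) * (a^2 - cc a b^2) / cc a b"
proof -
  define F where "F = (fact (2*j+1) :: real)"
  define G where "G = (fact j :: real)"
  define q where "q = sqrt ((2*real j+2)*(2*real j+3))"
  have F0: "F > 0" unfolding F_def by simp
  define s where "s = sqrt F"
  have n3: "nu a b (2*j+3) = Cn * uu a b ^ (Suc j) * (s * q) / (2^(Suc j) * (G * (real j+1)))"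
  proof -
    have e: "2*j+3 = 2*(Suc j)+1" by simp
    have "nu a b (2*j+3) = nu a b (2*(Suc j)+1)" by (simp only: e)
    also have "\<dots> = Cn * uu a b ^ (Suc j) * sqrt (fact (2*Suc j+1)) / (2^(Suc j) * fact (Suc j))"
      by (rule nu_odd)
    also have "fact (2*Suc j+1) = F * ((2*real j+2)*(2*real j+3))"
      unfolding F_def by (simp add: fact_Suc algebra_simps)
    also have "(fact (Suc j)::real) = G * (real j+1)" unfolding G_def by (simp add: fact_Suc algebra_simps)
    finally show ?thesis unfolding q_def s_def by (simp add: real_sqrt_mult)
  qed
  have sF: "s * s = F" unfolding F_def s_def by simp
  have sq: "q * q = (2*real j+2)*(2*real j+3)" unfolding q_def by simp
  have G0: "G > 0" unfolding G_def by simp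
  have "nu a b (2*j+1) * MtM a b (2*j+1) (2*j+3) * nu a b (2*j+3)
      = Cn^2 * uu a b * (uu a b^2)^j * (s * s) * (q * q) * (a^2 - cc a b^2) / (cc a b * (2^j * G) * (2^(Suc j) * (G * (real j+1))))"
    unfolding n3 nu_odd M_off q_def[symmetric] F_def[symmetric] G_def[symmetric] s_def[symmetric]
    by (simp add: power2_eq_square power_mult_distrib power_mult[symmetric] algebra_simps)
  also have "\<dots> = KK * uu a b * (uu a b^2)^j * (F / (4^j * G^2) * (2*real j+3)) * (a^2 - cc a b^2) / cc a b"
  proof -
    have gen: "X*F*((2*z)*(2*z+1))*A/(c*(P*G)*((2*P)*(G*z))) = X*(F/(P*P*G^2)*(2*z+1))*A/c"
      if "c > 0" "G > 0" "P > 0" "z > 0" for X F A c G P z :: real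
      using that by (simp add: field_simps power2_eq_square)
    have c0: "cc a b > 0" using c_gt a by simp
    have p4: "(4::real)^j = 2^j * 2^j" by (simp add: power_mult_distrib[symmetric])
    have r1: "2*real j+2 = 2*(real j+1)" "2*real j+3 = 2*(real j+1)+1" by simp_all
    show ?thesis unfolding sF sq Cn_sq p4 power_Suc r1
      by (rule gen[OF c0 G0]) simp_all
  qed
  finally show ?thesis unfolding tt_def F_def G_def .
qed

lemma lam_odd: "lam a b (2*j+1) = sqrt (2*a/(a+b+cc a b)) * uu a b * (uu a b^2)^j"
  unfolding lam_def by (simp add: power_mult[symmetric] mult.commute[of 2])

lemma w_facts: "(1 - uu a b^2) powr (-3/2) = 1 / ((1 - uu a b^2) * sqrt (1 - uu a b^2))"
   "(1 - uu a b^2) powr (-5/2) = 1 / ((1 - uu a b^2)^2 * sqrt (1 - uu a b^2))"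
   "sqrt (1 - uu a b^2) = 2 * sqrt a * sqrt (cc a b) / (a + cc a b)"
proof -
  define w where "w = 1 - uu a b^2"
  have "w = (1 - uu a b) * (1 + uu a b)" unfolding w_def by (simp add: power2_eq_square algebra_simps)
  hence w0: "w > 0" using u_pos u_lt1 by simp
  have B1: "w powr (3/2) = w * sqrt w"
    using w0 powr_add[of w 1 "1/2"] by (simp add: powr_half_sqrt)
  have B2: "w powr (5/2) = w^2 * sqrt w"
    using w0 powr_add[of w 2 "1/2"] by (simp add: powr_half_sqrt)
  have A1: "w powr (-3/2) = inverse (w powr (3/2))" using powr_minus[of w "3/2"] by simp
  have A2: "w powr (-5/2) = inverse (w powr (5/2))" using powr_minus[of w "5/2"] by simp
  show "w powr (-3/2) = 1 / (w * sqrt w)" unfolding A1 B1 by (rule inverse_eq_divide)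
  show "w powr (-5/2) = 1 / (w^2 * sqrt w)" unfolding A2 B2 by (rule inverse_eq_divide)
  have ac: "a + cc a b > 0" using a c_gt by simp
  have "sqrt w = sqrt 4 * sqrt a * sqrt (cc a b) / sqrt ((a + cc a b)^2)"
    unfolding w_def one_minus_u2 by (simp add: real_sqrt_mult real_sqrt_divide)
  also have "\<dots> = 2 * sqrt a * sqrt (cc a b) / (a + cc a b)" using ac by simp
  finally show "sqrt w = 2 * sqrt a * sqrt (cc a b) / (a + cc a b)" .
qed

lemma KK_alt: "KK = 2 * sqrt a * sqrt (cc a b) * cc a b / (a + cc a b)^3"
proof -
  define qa where "qa = sqrt a"
  define qc where "qc = sqrt (cc a b)"
  have qa: "qa > 0" "qa^2 = a" unfolding qa_def using a by simp_all
  have qc: "qc > 0" "qc^2 = cc a b" unfolding qc_def using a c_gt by simp_all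
  have "KK = qc / qa * (qa^2) / (4 * (qc^2)^2) * (2*qc^2/(qa^2+qc^2))^3"
    unfolding KK_def qa qc by (simp add: real_sqrt_divide qa_def qc_def)
  also have "\<dots> = 2 * qa * qc * qc^2 / (qa^2 + qc^2)^3"
    using qa qc by (simp add: field_simps power2_eq_square power3_eq_cube)
  finally show ?thesis unfolding qa qc qa_def[symmetric] qc_def[symmetric] .
qed

lemma KK_S1: "KK * (1 - uu a b^2) powr (-3/2) = 1/(4*a)"
proof -
  have g: "(2*x*y*c/z^3) * (1/((4*a*c/z^2) * (2*x*y/z))) = 1/(4*a)"
    if "x > 0" "y > 0" "c > 0" "z > 0" for x y c z :: real
    using that a by (simp add: field_simps power2_eq_square power3_eq_cube)
  have p: "sqrt a > 0" "sqrt (cc a b) > 0" "cc a b > 0" "a + cc a b > 0" using a c_gt by auto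
  show ?thesis unfolding w_facts(1,2) KK_alt unfolding w_facts(3) unfolding one_minus_u2
    by (rule g[OF p])
qed

lemma KK_S2: "KK * (3 * (1 - uu a b^2) powr (-5/2)) = 3 * (a + cc a b)^2 / (16*a^2*cc a b)"
proof -
  have g: "(2*x*y*c/z^3) * (3 * (1/((4*a*c/z^2)^2 * (2*x*y/z)))) = 3 * z^2/(16*a^2*c)"
    if "x > 0" "y > 0" "c > 0" "z > 0" for x y c z :: real
    using that a by (simp add: field_simps power2_eq_square power3_eq_cube)
  have p: "sqrt a > 0" "sqrt (cc a b) > 0" "cc a b > 0" "a + cc a b > 0" using a c_gt by auto
  show ?thesis unfolding w_facts(1,2) KK_alt unfolding w_facts(3) unfolding one_minus_u2
    by (rule g[OF p])
qed

end



lemma sum_odd_split: "(\<Sum>k\<le>2*m+1. f k) = (\<Sum>j\<le>m. f (2*j) + f (2*j+1))" for m :: nat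
proof (induction m)
  case 0 then show ?case by simp
next
  case (Suc m)
  have e: "2 * Suc m + 1 = Suc (Suc (2*m+1))" by simp
  show ?case unfolding e sum.atMost_Suc Suc by (simp add: add.assoc)
qed

lemma MtM_sym: "MtM a b i j = MtM a b j i"
  unfolding MtM_def Let_def by auto

lemma MtM_col: "(\<Sum>i\<le>N. g i * MtM a b i (Suc N)) = (if N = 0 then 0 else g (N-1) * MtM a b (N-1) (Suc N))"
proof (cases N)
  case 0 then show ?thesis by (simp add: MtM_def Let_def)
next
  case (Suc n)
  have "(\<Sum>i\<le>N. g i * MtM a b i (Suc N)) = (\<Sum>i\<le>N. if i = n then g i * MtM a b i (Suc N) else 0)"
  proof (rule sum.cong)
    fix i assume i: "i \<in> {..N}"
    show "g i * MtM a b i (Suc N) = (if i = n then g i * MtM a b i (Suc N) else 0)"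
    proof (cases "i = n")
      case False
      hence "MtM a b i (Suc N) = 0" using i Suc unfolding MtM_def Let_def by auto
      thus ?thesis using False by simp
    qed simp
  qed simp
  also have "\<dots> = g n * MtM a b n (Suc N)" using Suc by (simp add: sum.delta')
  finally show ?thesis using Suc by simp
qed

definition QQ :: "real \<Rightarrow> real \<Rightarrow> nat \<Rightarrow> real" where
  "QQ a b N = (\<Sum>i\<le>N. \<Sum>j\<le>N. nu a b i * MtM a b i j * nu a b j)"

lemma QQ_Suc: "QQ a b (Suc N) = QQ a b N + 2 * (if N = 0 then 0 else nu a b (N-1) * MtM a b (N-1) (Suc N) * nu a b (Suc N))
    + nu a b (Suc N) * MtM a b (Suc N) (Suc N) * nu a b (Suc N)"
proof -
  have s1: "(\<Sum>i\<le>N. nu a b i * MtM a b i (Suc N) * nu a b (Suc N)) = (if N = 0 then 0 else nu a b (N-1) * MtM a b (N-1) (Suc N) * nu a b (Suc N))"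
    using MtM_col[where g = "\<lambda>i. nu a b i" and N = N and a = a and b = b] by (simp add: sum_distrib_right[symmetric])
  have s2: "(\<Sum>j\<le>N. nu a b (Suc N) * MtM a b (Suc N) j * nu a b j) = (\<Sum>i\<le>N. nu a b i * MtM a b i (Suc N) * nu a b (Suc N))"
    by (rule sum.cong) (auto simp: MtM_sym[of a b "Suc N"])
  show ?thesis unfolding QQ_def sum.atMost_Suc sum.distrib s2 s1 by simp
qed

lemma QQ_odd: "QQ a b (2*m+1) = (\<Sum>j\<le>m. nu a b (2*j+1)^2 * MtM a b (2*j+1) (2*j+1))
   + 2 * (\<Sum>j<m. nu a b (2*j+1) * MtM a b (2*j+1) (2*j+3) * nu a b (2*j+3))"
proof (induction m)
  case 0
  have "QQ a b 1 = QQ a b 0 + nu a b 1 * MtM a b 1 1 * nu a b 1"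
    using QQ_Suc[of a b 0] by simp
  moreover have "QQ a b 0 = 0" unfolding QQ_def by (simp add: nu_def)
  ultimately show ?case by (simp add: power2_eq_square)
next
  case (Suc m)
  have e1: "2 * Suc m + 1 = Suc (Suc (2*m+1))" by simp
  have ev: "nu a b (Suc (2*m+1)) = 0" unfolding nu_def by simp
  have "QQ a b (2 * Suc m + 1) = QQ a b (2*m+1) + 2 * (nu a b (2*m+1) * MtM a b (2*m+1) (2*m+3) * nu a b (2*m+3))
      + nu a b (2*m+3)^2 * MtM a b (2*m+3) (2*m+3)"
    unfolding e1 QQ_Suc[of a b "Suc (2*m+1)"] QQ_Suc[of a b "2*m+1"] ev
    by (simp add: power2_eq_square numeral_3_eq_3)
  also have "\<dots> = (\<Sum>j\<le>Suc m. nu a b (2*j+1)^2 * MtM a b (2*j+1) (2*j+1))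
   + 2 * (\<Sum>j<Suc m. nu a b (2*j+1) * MtM a b (2*j+1) (2*j+3) * nu a b (2*j+3))"
    unfolding Suc by (simp add: algebra_simps numeral_3_eq_3)
  finally show ?case .
qed




lemma summ1: assumes "0 \<le> r" "r < (1::real)" shows "summable (\<lambda>i. (real i+1)^1 * r^i)"
proof -
  have "(\<lambda>n. of_nat (Suc n) * r ^ n) sums (1 / (1 - r)^2)" by (rule geometric_deriv_sums) (use assms in simp)
  thus ?thesis by (simp add: sums_iff add.commute)
qed

lemma summ2: assumes "0 \<le> r" "r < (1::real)" shows "summable (\<lambda>i. (real i+1)^2 * r^i)"
proof -
  have "summable (\<lambda>n. diffs (\<lambda>n. of_nat (Suc n) :: real) n * r ^ n)"
  proof (rule termdiff_converges[where K = 1])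
    show "norm r < 1" using assms by simp
    fix x :: real assume "norm x < 1"
    hence "(\<lambda>n. of_nat (Suc n) * x ^ n) sums (1 / (1 - x)^2)" by (intro geometric_deriv_sums) simp
    thus "summable (\<lambda>n. of_nat (Suc n) * x ^ n)" by (simp add: sums_iff)
  qed
  hence s: "summable (\<lambda>n. (real n + 1) * (real n + 2) * r ^ n)" by (simp add: diffs_def algebra_simps)
  show ?thesis
  proof (rule summable_comparison_test[OF _ s])
    show "\<exists>N. \<forall>n\<ge>N. norm ((real n+1)^2 * r^n) \<le> (real n + 1) * (real n + 2) * r ^ n"
      using assms by (intro exI[of _ 0] allI impI) (simp add: power2_eq_square mult_right_mono)
  qed
qed

lemma lin_rearr: fixes x y p q f w :: real
  assumes "x*f + y*w = 1" shows "x*p + y*q - 1 = x*(p-f) + y*(q-w)"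
proof -
  have "x*(p-f) + y*(q-w) = x*p + y*q - (x*f + y*w)" by (simp add: algebra_simps)
  thus ?thesis using assms by simp
qed

context fixes a b :: real assumes a: "a > 0" and b: "b > 0"
begin

lemma r_props: "0 \<le> uu a b^2" "uu a b^2 < 1"
  using u_pos[OF a b] u_lt1[OF a b] by (simp_all add: power_less_one_iff abs_less_iff)

lemma KK_nonneg: "KK a b \<ge> 0" using Cn_sq[OF a b] by (metis zero_le_power2)

lemma norm_sum: "(\<Sum>k\<le>2*m+1. (alpha a b m k)^2) = KK a b * (\<Sum>j<Suc m. tt j * (uu a b^2)^j)"
proof -
  have "(\<Sum>k\<le>2*m+1. (alpha a b m k)^2) = (\<Sum>k\<le>2*m+1. (nu a b k)^2)"
    by (rule sum.cong) (auto simp: alpha_def)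
  also have "\<dots> = (\<Sum>j\<le>m. KK a b * (tt j * (uu a b^2)^j))"
  proof -
    have t: "nu a b (2*j)^2 + nu a b (2*j+1)^2 = KK a b * (tt j * (uu a b^2)^j)" for j
      by (simp only: nu_even[OF a b] nu_odd_sq[OF a b]) (simp add: mult_ac)
    show ?thesis unfolding sum_odd_split by (rule sum.cong[OF refl t])
  qed
  finally show ?thesis by (simp add: sum_distrib_left lessThan_Suc_atMost)
qed

lemma part_i: assumes m: "m \<ge> 1"
  shows "\<bar>(\<Sum>k\<le>2*m+1. (alpha a b m k)^2) - 1/(4*a)\<bar>
     \<le> (6 * KK a b * suminf (\<lambda>i. (real i+1)^1 * (uu a b^2)^i)) * real m * uu a b ^ (2*m)"
proof -
  define r where "r = uu a b^2"
  define D where "D = suminf (\<lambda>i. (real i+1)^1 * r^i)"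
  have r: "0 \<le> r" "r < 1" using r_props unfolding r_def by auto
  have D0: "D \<ge> 0" unfolding D_def by (rule suminf_nonneg[OF summ1[OF r]]) (use r in simp)
  have bd: "\<bar>tt j * r^j\<bar> \<le> 2 * (real j+1)^1 * r^j" for j
    using tt_le[of j] tt_pos[of j] r by (simp add: mult_right_mono)
  have tb: "\<bar>(1 - r) powr (-3/2) - (\<Sum>j<Suc m. tt j * r^j)\<bar> \<le> 2 * D * ((real (Suc m)+1)^1 * r^(Suc m))"
    unfolding D_def by (rule tail_bound[OF sumS1[OF r] r(1) summ1[OF r] bd])
  have D0': "0 \<le> 2 * D" using D0 by simp
  have "(real (Suc m)+1)^1 * r^(Suc m) \<le> (3 * real m) * r^m"
  proof -
    have "r^(Suc m) \<le> r^m" using r by (simp add: power_decreasing_iff power_le_one mult_left_le_one_le)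
    moreover have "real (Suc m) + 1 \<le> 3 * real m" using m by simp
    ultimately show ?thesis using r by (simp add: mult_mono)
  qed
  hence tb2: "\<bar>(1 - r) powr (-3/2) - (\<Sum>j<Suc m. tt j * r^j)\<bar> \<le> 2 * D * ((3 * real m) * r^m)"
    using tb mult_left_mono[OF _ D0'] by (meson order_trans)
  have "\<bar>(\<Sum>k\<le>2*m+1. (alpha a b m k)^2) - 1/(4*a)\<bar> = KK a b * \<bar>(1 - r) powr (-3/2) - (\<Sum>j<Suc m. tt j * r^j)\<bar>"
    unfolding norm_sum KK_S1[OF a b, symmetric] r_def using KK_nonneg
    by (simp add: abs_mult right_diff_distrib[symmetric] abs_minus_commute)
  also have "\<dots> \<le> KK a b * (2 * D * ((3 * real m) * r^m))" by (rule mult_left_mono[OF tb2 KK_nonneg])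
  also have "\<dots> = (6 * KK a b * D) * real m * uu a b ^ (2*m)" unfolding r_def by (simp add: power_mult)
  finally show ?thesis unfolding D_def r_def .
qed

lemma part_ii: "(\<Sum>k\<le>2*m+1. alpha a b m k * eta a b k) = 0"
  by (rule sum.neutral) (auto simp: alpha_def nu_def eta_def)

lemma part_iv: assumes m: "m \<ge> 1"
  shows "(\<Sum>k\<le>2*m+1. (alpha a b m k)^2 / lam a b k)
     \<le> (4 * KK a b / (sqrt (2*a/(a+b+cc a b)) * uu a b)) * real m powr (3/2)"
proof -
  define P where "P = sqrt (2*a/(a+b+cc a b))"
  have P0: "P > 0" unfolding P_def using a b c_gt[OF a b] by simp
  have u0: "uu a b > 0" by (rule u_pos[OF a b])
  have "(\<Sum>k\<le>2*m+1. (alpha a b m k)^2 / lam a b k) = (\<Sum>k\<le>2*m+1. (nu a b k)^2 / lam a b k)"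
    by (rule sum.cong) (auto simp: alpha_def)
  also have "\<dots> = (\<Sum>j\<le>m. KK a b / (P * uu a b) * tt j)"
  proof -
    have t: "nu a b (2*j)^2 / lam a b (2*j) + nu a b (2*j+1)^2 / lam a b (2*j+1) = KK a b / (P * uu a b) * tt j" for j
    proof -
      have "(uu a b^2)^j > 0" using u0 by simp
      thus ?thesis unfolding nu_even[OF a b] nu_odd_sq[OF a b] lam_odd[OF a b] P_def[symmetric]
        using P0 u0 by (simp add: field_simps)
    qed
    show ?thesis unfolding sum_odd_split by (rule sum.cong[OF refl t])
  qed
  also have "\<dots> = KK a b / (P * uu a b) * (\<Sum>j\<le>m. tt j)" by (simp add: sum_distrib_left)
  also have "\<dots> \<le> KK a b / (P * uu a b) * (4 * (real m * sqrt (real m)))"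
  proof (rule mult_left_mono)
    show "0 \<le> KK a b / (P * uu a b)" using KK_nonneg P0 u0 by simp
    have "(\<Sum>j\<le>m. tt j) \<le> of_nat (card {..m}) * sqrt (2 * real m + 1)"
    proof (rule sum_bounded_above)
      fix j assume "j \<in> {..m}"
      hence "tt j ^ 2 \<le> 2 * real m + 1" using tt_sq[of j] by (simp add: order_trans)
      thus "tt j \<le> sqrt (2 * real m + 1)" by (rule real_le_rsqrt)
    qed
    also have "\<dots> = (real m + 1) * sqrt (2 * real m + 1)" by simp
    also have "\<dots> \<le> (2 * real m) * (2 * sqrt (real m))"
    proof (rule mult_mono)
      show "real m + 1 \<le> 2 * real m" using m by simp
      have "sqrt (2 * real m + 1) \<le> sqrt (4 * real m)" using m by simp
      also have "\<dots> = 2 * sqrt (real m)" by (simp add: real_sqrt_mult)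
      finally show "sqrt (2 * real m + 1) \<le> 2 * sqrt (real m)" .
    qed auto
    finally show "(\<Sum>j\<le>m. tt j) \<le> 4 * (real m * sqrt (real m))" by simp
  qed
  also have "real m * sqrt (real m) = real m powr (3/2)"
    using m powr_add[of "real m" 1 "1/2"] by (simp add: powr_half_sqrt)
  finally show ?thesis unfolding P_def by (simp add: mult_ac)
qed

lemma quad_eq: "(\<Sum>i\<le>2*m+1. \<Sum>j\<le>2*m+1. alpha a b m i * MtM a b i j * alpha a b m j) = QQ a b (2*m+1)"
  unfolding QQ_def by (intro sum.cong refl) (auto simp: alpha_def)

lemma value_one: "KK a b / cc a b * (2*(a^2+cc a b^2) * (3 * (1 - uu a b^2) powr (-5/2))
     + ((a - cc a b)^2 - 4*(a^2+cc a b^2)) * (1 - uu a b^2) powr (-3/2))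
   + 2 * (KK a b * uu a b * (a^2 - cc a b^2) / cc a b) * (3 * (1 - uu a b^2) powr (-5/2)) = 1"
proof -
  have g: "1/c * (2*(a^2+c^2) * P2 + ((a - c)^2 - 4*(a^2+c^2)) * P1) + 2 * ((c-a)/(c+a) * (a^2 - c^2) / c) * P2 = 1"
    if "c > 0" "P2 = 3*(a+c)^2/(16*a^2*c)" "P1 = 1/(4*a)" for c P1 P2 :: real
  proof -
    have "(c-a)/(c+a) * (a^2 - c^2) = (a - c) * (c - a)" using that a by (simp add: field_simps power2_eq_square)
    moreover have "1/c * (2*(a^2+c^2) * (3*(a+c)^2/(16*a^2*c)) + ((a - c)^2 - 4*(a^2+c^2)) * (1/(4*a))) + 2 * ((a - c) * (c - a) / c) * (3*(a+c)^2/(16*a^2*c)) = 1"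
      using that(1) a by (simp add: field_simps power2_eq_square)
    ultimately show ?thesis unfolding that(2,3) by simp
  qed
  have c0: "cc a b > 0" using c_gt[OF a b] a by simp
  have e: "KK a b / cc a b * (2*(a^2+cc a b^2) * (3 * (1 - uu a b^2) powr (-5/2))
     + ((a - cc a b)^2 - 4*(a^2+cc a b^2)) * (1 - uu a b^2) powr (-3/2))
   + 2 * (KK a b * uu a b * (a^2 - cc a b^2) / cc a b) * (3 * (1 - uu a b^2) powr (-5/2))
   = 1/cc a b * (2*(a^2+cc a b^2) * (KK a b * (3 * (1 - uu a b^2) powr (-5/2)))
     + ((a - cc a b)^2 - 4*(a^2+cc a b^2)) * (KK a b * (1 - uu a b^2) powr (-3/2)))
   + 2 * (uu a b * (a^2 - cc a b^2) / cc a b) * (KK a b * (3 * (1 - uu a b^2) powr (-5/2)))"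
    by (simp add: algebra_simps)
  show ?thesis unfolding e unfolding KK_S1[OF a b] KK_S2[OF a b] unfolding u_eq[OF a b]
    by (rule g[OF c0]) simp_all
qed

lemma part_iii: assumes m: "m \<ge> 1"
  shows "\<bar>(\<Sum>i\<le>2*m+1. \<Sum>j\<le>2*m+1. alpha a b m i * MtM a b i j * alpha a b m j) - 1\<bar>
     \<le> (KK a b / cc a b * (8*(a^2+cc a b^2) + 2*\<bar>(a - cc a b)^2 - 4*(a^2+cc a b^2)\<bar>) * suminf (\<lambda>i. (real i+1)^2 * (uu a b^2)^i) * 9
         + 2 * (KK a b * uu a b * \<bar>a^2 - cc a b^2\<bar> / cc a b) * (16 * suminf (\<lambda>i. (real i+1)^2 * (uu a b^2)^i)))
        * (real m)^2 * uu a b ^ (2*m)"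
proof -
  define c where "c = cc a b"
  define u where "u = uu a b"
  define r where "r = u^2"
  define K where "K = KK a b"
  define D where "D = suminf (\<lambda>i. (real i+1)^2 * r^i)"
  define A where "A = 2*(a^2+c^2)"
  define B where "B = (a - c)^2 - 4*(a^2+c^2)"
  define BF where "BF = 8*(a^2+c^2) + 2*\<bar>B\<bar>"
  define Hf where "Hf = (\<lambda>j. tt j * r^j)"
  define Gf where "Gf = (\<lambda>j. tt j * (2*real j+3) * r^j)"
  define Ff where "Ff = (\<lambda>j. A * Gf j + B * Hf j)"
  define S1 where "S1 = (1 - r) powr (-3/2)"
  define S2 where "S2 = 3 * (1 - r) powr (-5/2)"
  have r: "0 \<le> r" "r < 1" using r_props unfolding r_def u_def by auto
  have c0: "c > 0" unfolding c_def using c_gt[OF a b] a by simp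
  have u0: "u > 0" unfolding u_def by (rule u_pos[OF a b])
  have K0: "K \<ge> 0" unfolding K_def by (rule KK_nonneg)
  have D0: "D \<ge> 0" unfolding D_def by (rule suminf_nonneg[OF summ2[OF r]]) (use r in simp)
  have Hs: "Hf sums S1" unfolding Hf_def S1_def by (rule sumS1[OF r])
  have Gs: "Gf sums S2" unfolding Gf_def S2_def by (rule sumS2[OF r])
  have Fs: "Ff sums (A * S2 + B * S1)" unfolding Ff_def by (intro sums_add sums_mult Gs Hs)
  have Gb: "\<bar>Gf j\<bar> \<le> 4 * (real j+1)^2 * r^j" for j
  proof -
    have "tt j * (2*real j+3) \<le> (2*real j+1) * (2*real j+3)" by (rule mult_right_mono[OF tt_le]) simp
    also have "\<dots> \<le> 4 * (real j+1)^2" by (simp add: power2_eq_square algebra_simps)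
    finally show ?thesis unfolding Gf_def using tt_pos[of j] r by (simp add: abs_mult mult_right_mono)
  qed
  have Hb: "\<bar>Hf j\<bar> \<le> 2 * (real j+1)^2 * r^j" for j
  proof -
    have h: "0 \<le> real j * real j" by simp
    have h2: "2*(real j+1)^2 = 2 + 4*real j + 2*(real j*real j)" by (simp add: power2_eq_square algebra_simps)
    have "tt j \<le> 2 * (real j+1)^2" using tt_le[of j] h h2 by linarith
    thus ?thesis unfolding Hf_def using tt_pos[of j] r by (simp add: abs_mult mult_right_mono)
  qed
  have A0: "A \<ge> 0" unfolding A_def by simp
  have Fb: "\<bar>Ff j\<bar> \<le> BF * (real j+1)^2 * r^j" for j
  proof -
    have "\<bar>Ff j\<bar> \<le> A * \<bar>Gf j\<bar> + \<bar>B\<bar> * \<bar>Hf j\<bar>" unfolding Ff_def using A0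
      by (metis abs_mult abs_of_nonneg abs_triangle_ineq)
    also have "\<dots> \<le> A * (4 * (real j+1)^2 * r^j) + \<bar>B\<bar> * (2 * (real j+1)^2 * r^j)"
      by (intro add_mono mult_left_mono Gb Hb A0) simp
    also have "\<dots> = BF * (real j+1)^2 * r^j" unfolding BF_def A_def by (simp add: algebra_simps)
    finally show ?thesis .
  qed
  have QQe: "QQ a b (2*m+1) = K / c * (\<Sum>j<Suc m. Ff j) + 2 * (K * u * (a^2 - c^2) / c) * (\<Sum>j<m. Gf j)"
  proof -
    have t1: "nu a b (2*j+1)^2 * MtM a b (2*j+1) (2*j+1) = K / c * Ff j" for j
    proof -
      have "nu a b (2*j+1)^2 * MtM a b (2*j+1) (2*j+1) = K * r^j * tt j * ((2*(2*real j+1)*(a^2+c^2) + (a - c)^2) / c)"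
        unfolding nu_odd_sq[OF a b] M_diag[OF a b] K_def r_def u_def c_def by simp
      also have "\<dots> = K / c * Ff j" unfolding Ff_def Gf_def Hf_def A_def B_def
        by (simp add: algebra_simps add_divide_distrib)
      finally show ?thesis .
    qed
    have t2: "nu a b (2*j+1) * MtM a b (2*j+1) (2*j+3) * nu a b (2*j+3) = (K * u * (a^2 - c^2) / c) * Gf j" for j
      unfolding off_prod[OF a b] Gf_def K_def u_def c_def r_def by (simp add: mult_ac)
    show ?thesis unfolding QQ_odd t1 t2 sum_distrib_left[symmetric] lessThan_Suc_atMost by (simp only: mult.assoc)
  qed
  have val: "K / c * (A * S2 + B * S1) + 2 * (K * u * (a^2 - c^2) / c) * S2 = 1"
    using value_one unfolding K_def c_def A_def B_def S1_def S2_def u_def r_def by simp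
  have tF: "\<bar>(A * S2 + B * S1) - (\<Sum>j<Suc m. Ff j)\<bar> \<le> BF * D * ((real (Suc m)+1)^2 * r^(Suc m))"
    unfolding D_def by (rule tail_bound[OF Fs r(1) summ2[OF r] Fb])
  have tG: "\<bar>S2 - (\<Sum>j<m. Gf j)\<bar> \<le> 4 * D * ((real m+1)^2 * r^m)"
    unfolding D_def by (rule tail_bound[OF Gs r(1) summ2[OF r] Gb])
  have BF0: "BF \<ge> 0" unfolding BF_def by simp
  have rm: "r^(Suc m) \<le> r^m" using r by (simp add: power_decreasing_iff power_le_one mult_left_le_one_le)
  have rm0: "r^m \<ge> 0" using r by simp
  have m1: "(real (Suc m)+1)^2 \<le> 9 * (real m)^2" "(real m+1)^2 \<le> 4 * (real m)^2"
  proof -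
    have "real (Suc m)+1 \<le> 3*real m" "real m + 1 \<le> 2 * real m" using m by simp_all
    hence "(real (Suc m)+1)^2 \<le> (3*real m)^2" "(real m+1)^2 \<le> (2*real m)^2"
      by (intro power_mono; simp)+
    thus "(real (Suc m)+1)^2 \<le> 9 * (real m)^2" "(real m+1)^2 \<le> 4 * (real m)^2"
      by (simp_all add: power_mult_distrib)
  qed
  have tF2: "\<bar>(A * S2 + B * S1) - (\<Sum>j<Suc m. Ff j)\<bar> \<le> BF * D * 9 * ((real m)^2 * r^m)"
  proof -
    have "(real (Suc m)+1)^2 * r^(Suc m) \<le> (9 * (real m)^2) * r^m"
      by (rule mult_mono[OF m1(1) rm]) (use r in simp_all)
    hence "BF * D * ((real (Suc m)+1)^2 * r^(Suc m)) \<le> BF * D * ((9 * (real m)^2) * r^m)"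
      using BF0 D0 by (simp add: mult_left_mono)
    thus ?thesis using tF by (simp add: mult_ac)
  qed
  have tG2: "\<bar>S2 - (\<Sum>j<m. Gf j)\<bar> \<le> 16 * D * ((real m)^2 * r^m)"
  proof -
    have "(real m+1)^2 * r^m \<le> (4 * (real m)^2) * r^m"
      using m1(2) rm0 by (rule mult_right_mono)
    hence "4 * D * ((real m+1)^2 * r^m) \<le> 4 * D * ((4 * (real m)^2) * r^m)"
      by (rule mult_left_mono) (use D0 in simp)
    thus ?thesis using tG by (simp add: mult_ac)
  qed
  have "\<bar>QQ a b (2*m+1) - 1\<bar> = \<bar>K / c * ((\<Sum>j<Suc m. Ff j) - (A * S2 + B * S1)) + 2 * (K * u * (a^2 - c^2) / c) * ((\<Sum>j<m. Gf j) - S2)\<bar>"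
    unfolding QQe lin_rearr[OF val] ..
  also have "\<dots> \<le> K / c * \<bar>(A * S2 + B * S1) - (\<Sum>j<Suc m. Ff j)\<bar> + 2 * (K * u * \<bar>a^2 - c^2\<bar> / c) * \<bar>S2 - (\<Sum>j<m. Gf j)\<bar>"
    using K0 c0 u0 by (simp add: abs_mult abs_minus_commute order_trans[OF abs_triangle_ineq])
  also have "\<dots> \<le> K / c * (BF * D * 9 * ((real m)^2 * r^m)) + 2 * (K * u * \<bar>a^2 - c^2\<bar> / c) * (16 * D * ((real m)^2 * r^m))"
    using K0 c0 u0 by (intro add_mono mult_left_mono tF2 tG2) simp_all
  also have "\<dots> = (K / c * BF * D * 9 + 2 * (K * u * \<bar>a^2 - c^2\<bar> / c) * (16 * D)) * (real m)^2 * u^(2*m)"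
  proof -
    have pm: "u^(2*m) = r^m" unfolding r_def by (simp only: power_mult)
    show ?thesis unfolding pm by (simp add: algebra_simps)
  qed
  finally show ?thesis unfolding quad_eq K_def c_def u_def BF_def B_def D_def r_def by (simp add: mult_ac)
qed

end

lemma le_trans_mul: fixes X Li L t :: real
  assumes "X \<le> Li * t" "Li \<le> L" "0 \<le> t" shows "X \<le> L * t"
  using assms by (meson mult_right_mono order_trans)

theorem mainTheorem16:
  fixes a b :: real
  assumes "a > 0" and "b > 0"
  shows "\<exists>L>0. \<forall>m::nat.
     real m \<ge> max (- 3 / (4 * ln (uu a b))) (1 / (6 * cc a b)) \<longrightarrow>
       \<bar>(\<Sum>k\<le>2*m+1. (alpha a b m k)^2) - 1/(4*a)\<bar> \<le> L * real m * uu a b ^ (2*m)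
     \<and> (\<Sum>k\<le>2*m+1. alpha a b m k * eta a b k) = 0
     \<and> \<bar>(\<Sum>i\<le>2*m+1. \<Sum>j\<le>2*m+1. alpha a b m i * MtM a b i j * alpha a b m j) - 1\<bar>
          \<le> L * (real m)^2 * uu a b ^ (2*m)
     \<and> (\<Sum>k\<le>2*m+1. (alpha a b m k)^2 / lam a b k) \<le> L * real m powr (3/2)"
proof -
  note a = assms(1) and b = assms(2)
  have r: "0 \<le> uu a b^2" "uu a b^2 < 1" using r_props[OF a b] by auto
  have c0: "cc a b > 0" using c_gt[OF a b] a by simp
  have u0: "uu a b > 0" "uu a b < 1" using u_pos[OF a b] u_lt1[OF a b] by auto
  have K0: "KK a b \<ge> 0" by (rule KK_nonneg[OF a b])
  have D1: "suminf (\<lambda>i. (real i+1)^1 * (uu a b^2)^i) \<ge> 0" by (rule suminf_nonneg[OF summ1[OF r]]) (use r in simp)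
  have D2: "suminf (\<lambda>i. (real i+1)^2 * (uu a b^2)^i) \<ge> 0" by (rule suminf_nonneg[OF summ2[OF r]]) (use r in simp)
  have P0: "sqrt (2*a/(a+b+cc a b)) > 0" using a b c0 by simp
  define L1 where "L1 = 6 * KK a b * suminf (\<lambda>i. (real i+1)^1 * (uu a b^2)^i)"
  define L3 where "L3 = KK a b / cc a b * (8*(a^2+cc a b^2) + 2*\<bar>(a - cc a b)^2 - 4*(a^2+cc a b^2)\<bar>) * suminf (\<lambda>i. (real i+1)^2 * (uu a b^2)^i) * 9
         + 2 * (KK a b * uu a b * \<bar>a^2 - cc a b^2\<bar> / cc a b) * (16 * suminf (\<lambda>i. (real i+1)^2 * (uu a b^2)^i))"
  define L4 where "L4 = 4 * KK a b / (sqrt (2*a/(a+b+cc a b)) * uu a b)"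
  have L1: "L1 \<ge> 0" unfolding L1_def using K0 D1 by simp
  have L3: "L3 \<ge> 0" unfolding L3_def using K0 D2 c0 u0 by (intro add_nonneg_nonneg mult_nonneg_nonneg) auto
  have L4: "L4 \<ge> 0" unfolding L4_def using K0 P0 u0 by simp
  define L where "L = 1 + L1 + L3 + L4"
  have LL: "L1 \<le> L" "L3 \<le> L" "L4 \<le> L" unfolding L_def using L1 L3 L4 by simp_all
  have "L > 0" unfolding L_def using L1 L3 L4 by simp
  moreover have "\<forall>m::nat.
     real m \<ge> max (- 3 / (4 * ln (uu a b))) (1 / (6 * cc a b)) \<longrightarrow>
       \<bar>(\<Sum>k\<le>2*m+1. (alpha a b m k)^2) - 1/(4*a)\<bar> \<le> L * real m * uu a b ^ (2*m)
     \<and> (\<Sum>k\<le>2*m+1. alpha a b m k * eta a b k) = 0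
     \<and> \<bar>(\<Sum>i\<le>2*m+1. \<Sum>j\<le>2*m+1. alpha a b m i * MtM a b i j * alpha a b m j) - 1\<bar>
          \<le> L * (real m)^2 * uu a b ^ (2*m)
     \<and> (\<Sum>k\<le>2*m+1. (alpha a b m k)^2 / lam a b k) \<le> L * real m powr (3/2)"
  proof (intro allI impI)
    fix m :: nat
    assume hm: "real m \<ge> max (- 3 / (4 * ln (uu a b))) (1 / (6 * cc a b))"
    have "ln (uu a b) < 0" using u0 by simp
    hence "- 3 / (4 * ln (uu a b)) > 0" by (simp add: divide_pos_neg)
    hence "real m > 0" using hm by linarith
    hence m: "m \<ge> 1" by simp
    have t1: "0 \<le> real m * uu a b ^ (2*m)" using u0 by simp
    have t3: "0 \<le> (real m)^2 * uu a b ^ (2*m)" using u0 by simp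
    have t4: "0 \<le> real m powr (3/2)" by simp
    have "\<bar>(\<Sum>k\<le>2*m+1. (alpha a b m k)^2) - 1/(4*a)\<bar> \<le> L1 * (real m * uu a b ^ (2*m))"
      using part_i[OF a b m] unfolding L1_def by (simp add: mult.assoc)
    hence i: "\<bar>(\<Sum>k\<le>2*m+1. (alpha a b m k)^2) - 1/(4*a)\<bar> \<le> L * real m * uu a b ^ (2*m)"
      using le_trans_mul[OF _ LL(1) t1] by (simp add: mult.assoc)
    have "\<bar>(\<Sum>i\<le>2*m+1. \<Sum>j\<le>2*m+1. alpha a b m i * MtM a b i j * alpha a b m j) - 1\<bar> \<le> L3 * ((real m)^2 * uu a b ^ (2*m))"
      using part_iii[OF a b m] unfolding L3_def by (simp add: mult.assoc)
    hence iii: "\<bar>(\<Sum>i\<le>2*m+1. \<Sum>j\<le>2*m+1. alpha a b m i * MtM a b i j * alpha a b m j) - 1\<bar> \<le> L * (real m)^2 * uu a b ^ (2*m)"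
      using le_trans_mul[OF _ LL(2) t3] by (simp add: mult.assoc)
    have "(\<Sum>k\<le>2*m+1. (alpha a b m k)^2 / lam a b k) \<le> L4 * real m powr (3/2)"
      using part_iv[OF a b m] unfolding L4_def .
    hence iv: "(\<Sum>k\<le>2*m+1. (alpha a b m k)^2 / lam a b k) \<le> L * real m powr (3/2)"
      using le_trans_mul[OF _ LL(3) t4] by simp
    show "\<bar>(\<Sum>k\<le>2*m+1. (alpha a b m k)^2) - 1/(4*a)\<bar> \<le> L * real m * uu a b ^ (2*m)
     \<and> (\<Sum>k\<le>2*m+1. alpha a b m k * eta a b k) = 0
     \<and> \<bar>(\<Sum>i\<le>2*m+1. \<Sum>j\<le>2*m+1. alpha a b m i * MtM a b i j * alpha a b m j) - 1\<bar>
          \<le> L * (real m)^2 * uu a b ^ (2*m)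
     \<and> (\<Sum>k\<le>2*m+1. (alpha a b m k)^2 / lam a b k) \<le> L * real m powr (3/2)"
      using i iii iv part_ii[OF a b] by blast
  qed
  ultimately show ?thesis by blast
qed



end
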